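(* For every natural number $n\ge1$, $bell(n)=bell_+(n)$.
   Context: $\Re_{n+1}$ denotes the real $(n+1)\times(n+1)$ matrices with indices $0\le i,j\le n$. $bell(n)$ is the set of all $(p_{ij})\in\Re_{n+1}$ such that $p_{00}=1$ and there exist a finite-dimensional Hilbert space $H$, projections $E_1,\dots,E_n,F_1,\dots,F_n$ on $H$, and a density operator $W$ on $H\otimes H$ with $p_{i0}=\mathrm{tr}[W(E_i\otimes I)]$, $p_{0j}=\mathrm{tr}[W(I\otimes F_j)]$, $p_{ij}=\mathrm{tr}[W(E_i\otimes F_j)]$ for $i,j=1,\dots,n$. $bell_+(n)$ is the set of all $(q_{ij})\in\Re_{n+1}$ such that there exist a finite-dimensional Hilbert space $H$, positive semidefinite operators $A_0=I,A_1,\dots,A_n$ and $B_0=I,B_1,\dots,B_n$ on $H$ whose spectra are contained in $[0,1]$, and a density operator $W$ on $H\otimes H$ with $q_{ij}=\mathrm{tr}[W(A_i\otimes B_j)]$ for all $i,j=0,1,\dots,n$. *)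

theory Defs
  imports "Jordan_Normal_Form.Jordan_Normal_Form"
begin

text \<open>A finite-dimensional (complex) Hilbert space H is modelled as C^d for some d;
  operators on H are d x d complex matrices; H \<otimes> H is C^(d*d) and the tensor
  product of operators is the Kronecker product.\<close>

definition mtrace :: "complex mat \<Rightarrow> complex" where
  "mtrace A = (\<Sum>i<dim_row A. A $$ (i, i))"

definition adj :: "complex mat \<Rightarrow> complex mat" where
  "adj A = mat (dim_col A) (dim_row A) (\<lambda>(i, j). cnj (A $$ (j, i)))"

definition kron :: "complex mat \<Rightarrow> complex mat \<Rightarrow> complex mat" where
  "kron A B = mat (dim_row A * dim_row B) (dim_col A * dim_col B)
     (\<lambda>(i, j). A $$ (i div dim_row B, j div dim_col B) * B $$ (i mod dim_row B, j mod dim_col B))"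

definition cinner :: "complex vec \<Rightarrow> complex vec \<Rightarrow> complex" where
  "cinner v w = (\<Sum>i<dim_vec v. cnj (v $ i) * w $ i)"

definition hermitian :: "nat \<Rightarrow> complex mat \<Rightarrow> bool" where
  "hermitian d A \<longleftrightarrow> A \<in> carrier_mat d d \<and> adj A = A"

definition projection :: "nat \<Rightarrow> complex mat \<Rightarrow> bool" where
  "projection d P \<longleftrightarrow> hermitian d P \<and> P * P = P"

definition psd :: "nat \<Rightarrow> complex mat \<Rightarrow> bool" where
  "psd d A \<longleftrightarrow> hermitian d A \<and>
     (\<forall>v \<in> carrier_vec d. cinner v (A *\<^sub>v v) \<in> \<real> \<and> 0 \<le> Re (cinner v (A *\<^sub>v v)))"

definition density :: "nat \<Rightarrow> complex mat \<Rightarrow> bool" where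
  "density d W \<longleftrightarrow> psd d W \<and> mtrace W = 1"

definition spectrum :: "complex mat \<Rightarrow> complex set" where
  "spectrum A = {k. eigenvalue A k}"

definition bell :: "nat \<Rightarrow> real mat set" where
  "bell n = {p. p \<in> carrier_mat (n+1) (n+1) \<and> p $$ (0,0) = 1 \<and>
     (\<exists>(d::nat) (E :: nat \<Rightarrow> complex mat) (F :: nat \<Rightarrow> complex mat) (W :: complex mat).
        (\<forall>i\<in>{1..n}. projection d (E i)) \<and> (\<forall>j\<in>{1..n}. projection d (F j)) \<and>
        density (d*d) W \<and>
        (\<forall>i\<in>{1..n}. complex_of_real (p $$ (i,0)) = mtrace (W * kron (E i) (1\<^sub>m d))) \<and>
        (\<forall>j\<in>{1..n}. complex_of_real (p $$ (0,j)) = mtrace (W * kron (1\<^sub>m d) (F j))) \<and>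
        (\<forall>i\<in>{1..n}. \<forall>j\<in>{1..n}. complex_of_real (p $$ (i,j)) = mtrace (W * kron (E i) (F j))))}"

definition bell_plus :: "nat \<Rightarrow> real mat set" where
  "bell_plus n = {q. q \<in> carrier_mat (n+1) (n+1) \<and>
     (\<exists>(d::nat) (A :: nat \<Rightarrow> complex mat) (B :: nat \<Rightarrow> complex mat) (W :: complex mat).
        A 0 = 1\<^sub>m d \<and> B 0 = 1\<^sub>m d \<and>
        (\<forall>i\<in>{1..n}. psd d (A i) \<and> spectrum (A i) \<subseteq> complex_of_real ` {0..1}) \<and>
        (\<forall>j\<in>{1..n}. psd d (B j) \<and> spectrum (B j) \<subseteq> complex_of_real ` {0..1}) \<and>
        density (d*d) W \<and>
        (\<forall>i\<in>{0..n}. \<forall>j\<in>{0..n}. complex_of_real (q $$ (i,j)) = mtrace (W * kron (A i) (B j))))}"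

end

theory Submission
  imports Defs
begin


lemma sum_prod_split:
  fixes f :: "nat \<Rightarrow> 'a::comm_monoid_add"
  shows "(\<Sum>c<p*q. f c) = (\<Sum>a<p. \<Sum>b<q. f (a*q+b))"
proof -
  have "(\<Sum>c<p*q. f c) = (\<Sum>a<p. sum f {a*q..<a*q+q})"
    by (simp add: sum.nat_group)
  also have "\<dots> = (\<Sum>a<p. \<Sum>b<q. f (a*q+b))"
  proof (rule sum.cong[OF refl])
    fix a
    have "\<And>m. sum f {m..<m+q} = (\<Sum>b<q. f (m+b))"
      by (induct q) auto
    then show "sum f {a*q..<a*q+q} = (\<Sum>b<q. f (a*q+b))" .
  qed
  finally show ?thesis .
qed

lemma adj_carrier[simp]: "adj A \<in> carrier_mat (dim_col A) (dim_row A)"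
  unfolding adj_def by simp
lemma adj_dims[simp]: "dim_row (adj A) = dim_col A" "dim_col (adj A) = dim_row A"
  unfolding adj_def by simp_all
lemma adj_carrier2: "A \<in> carrier_mat r c \<Longrightarrow> adj A \<in> carrier_mat c r"
  by auto
lemma index_adj[simp]: "i < dim_col A \<Longrightarrow> j < dim_row A \<Longrightarrow> adj A $$ (i,j) = cnj (A $$ (j,i))"
  unfolding adj_def by simp
lemma adj_adj[simp]: "adj (adj A) = A"
  by (rule eq_matI) auto
lemma adj_mult: assumes "A \<in> carrier_mat r k" "B \<in> carrier_mat k c"
  shows "adj (A * B) = adj B * adj A"
proof (rule eq_matI)
  fix i j assume ij: "i < dim_row (adj B * adj A)" "j < dim_col (adj B * adj A)"
  then show "adj (A * B) $$ (i, j) = (adj B * adj A) $$ (i, j)"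
    using assms by (auto simp: index_mult_mat scalar_prod_def sum_conjugate intro!: sum.cong)
qed (use assms in auto)
lemma adj_one[simp]: "adj (1\<^sub>m n) = 1\<^sub>m n"
  by (rule eq_matI) auto
lemma adj_zero[simp]: "adj (0\<^sub>m r c) = 0\<^sub>m c r"
  by (rule eq_matI) auto
lemma adj_add: assumes "A \<in> carrier_mat r c" "B \<in> carrier_mat r c"
  shows "adj (A + B) = adj A + adj B"
  by (rule eq_matI) (use assms in auto)

lemma mtrace_comm: assumes "A \<in> carrier_mat r c" "B \<in> carrier_mat c r"
  shows "mtrace (A * B) = mtrace (B * A)"
proof -
  have "mtrace (A * B) = (\<Sum>i<r. \<Sum>k<c. A $$ (i,k) * B $$ (k,i))"
    using assms unfolding mtrace_def
    by (auto simp: index_mult_mat scalar_prod_def atLeast0LessThan intro!: sum.cong)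
  also have "\<dots> = (\<Sum>k<c. \<Sum>i<r. B $$ (k,i) * A $$ (i,k))"
    by (subst sum.swap) (simp add: mult.commute)
  also have "\<dots> = mtrace (B * A)"
    using assms unfolding mtrace_def
    by (auto simp: index_mult_mat scalar_prod_def atLeast0LessThan intro!: sum.cong)
  finally show ?thesis .
qed

lemma mtrace_one_mult: "A \<in> carrier_mat n n \<Longrightarrow> mtrace (A * 1\<^sub>m n) = mtrace A"
  by simp

lemma kron_carrier[simp]: "kron A B \<in> carrier_mat (dim_row A * dim_row B) (dim_col A * dim_col B)"
  unfolding kron_def by simp
lemma kron_dims[simp]: "dim_row (kron A B) = dim_row A * dim_row B"
  "dim_col (kron A B) = dim_col A * dim_col B"
  unfolding kron_def by simp_all
lemma index_kron[simp]: "i < dim_row A * dim_row B \<Longrightarrow> j < dim_col A * dim_col B \<Longrightarrow>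
  kron A B $$ (i,j) = A $$ (i div dim_row B, j div dim_col B) * B $$ (i mod dim_row B, j mod dim_col B)"
  unfolding kron_def by simp

lemma div_lt: "i < a * (b::nat) \<Longrightarrow> i div b < a"
  by (simp add: less_mult_imp_div_less)
lemma mod_lt: "i < a * (b::nat) \<Longrightarrow> i mod b < b"
  by (cases "b = 0") auto

lemma kron_mult:
  assumes A: "A \<in> carrier_mat r1 k1" and C: "C \<in> carrier_mat k1 c1"
    and B: "B \<in> carrier_mat r2 k2" and D: "D \<in> carrier_mat k2 c2"
  shows "kron A B * kron C D = kron (A * C) (B * D)"
proof (rule eq_matI)
  fix i j assume "i < dim_row (kron (A * C) (B * D))" "j < dim_col (kron (A * C) (B * D))"
  then have i: "i < r1 * r2" and j: "j < c1 * c2" using assms by auto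
  have "(kron A B * kron C D) $$ (i,j) =
     (\<Sum>c<k1*k2. kron A B $$ (i,c) * kron C D $$ (c,j))"
    using assms i j by (auto simp: index_mult_mat scalar_prod_def atLeast0LessThan intro!: sum.cong)
  also have "\<dots> = (\<Sum>a<k1. \<Sum>b<k2. kron A B $$ (i,a*k2+b) * kron C D $$ (a*k2+b,j))"
    by (rule sum_prod_split)
  also have "\<dots> = (\<Sum>a<k1. \<Sum>b<k2. (A $$ (i div r2, a) * C $$ (a, j div c2)) *
        (B $$ (i mod r2, b) * D $$ (b, j mod c2)))"
  proof (intro sum.cong refl)
    fix a b assume a: "a \<in> {..<k1}" and b: "b \<in> {..<k2}"
    have ab: "a*k2+b < k1*k2"
    proof -
      have "a*k2+b < a*k2+k2" using b by simp
      also have "\<dots> = (Suc a)*k2" by simp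
      also have "\<dots> \<le> k1*k2" using a by (intro mult_le_mono1) simp
      finally show ?thesis .
    qed
    have d: "(a*k2+b) div k2 = a" "(a*k2+b) mod k2 = b" using b by auto
    show "kron A B $$ (i,a*k2+b) * kron C D $$ (a*k2+b,j) =
        (A $$ (i div r2, a) * C $$ (a, j div c2)) * (B $$ (i mod r2, b) * D $$ (b, j mod c2))"
      using assms i j ab d by (simp add: algebra_simps)
  qed
  also have "\<dots> = (\<Sum>a<k1. A $$ (i div r2, a) * C $$ (a, j div c2)) *
        (\<Sum>b<k2. B $$ (i mod r2, b) * D $$ (b, j mod c2))"
    by (simp add: sum_product)
  also have "\<dots> = kron (A * C) (B * D) $$ (i,j)"
    using assms i j div_lt[OF i] div_lt[OF j] mod_lt[OF i] mod_lt[OF j]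
    by (simp add: index_mult_mat scalar_prod_def atLeast0LessThan)
  finally show "(kron A B * kron C D) $$ (i,j) = kron (A * C) (B * D) $$ (i,j)" .
qed (use assms in auto)

lemma adj_kron: "adj (kron A B) = kron (adj A) (adj B)"
proof (rule eq_matI)
  fix i j assume "i < dim_row (kron (adj A) (adj B))" "j < dim_col (kron (adj A) (adj B))"
  then have i: "i < dim_col A * dim_col B" and j: "j < dim_row A * dim_row B" by auto
  show "adj (kron A B) $$ (i,j) = kron (adj A) (adj B) $$ (i,j)"
    using i j div_lt[OF i] div_lt[OF j] mod_lt[OF i] mod_lt[OF j] by simp
qed auto

lemma kron_one: "kron (1\<^sub>m a) (1\<^sub>m b) = 1\<^sub>m (a*b)"
proof (rule eq_matI)
  fix i j assume "i < dim_row (1\<^sub>m (a*b))" "j < dim_col (1\<^sub>m (a*b))"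
  then have i: "i < a*b" and j: "j < a*b" by auto
  have "(i div b = j div b \<and> i mod b = j mod b) = (i = j)"
    by (metis div_mult_mod_eq)
  then show "kron (1\<^sub>m a) (1\<^sub>m b) $$ (i,j) = 1\<^sub>m (a*b) $$ (i,j)"
    using i j div_lt[OF i] div_lt[OF j] mod_lt[OF i] mod_lt[OF j] by auto
qed auto

lemma cinner_adj: assumes M: "M \<in> carrier_mat r c" and v: "v \<in> carrier_vec r" and w: "w \<in> carrier_vec c"
  shows "cinner v (M *\<^sub>v w) = cinner (adj M *\<^sub>v v) w"
proof -
  have "cinner v (M *\<^sub>v w) = (\<Sum>i<r. \<Sum>k<c. cnj (v $ i) * M $$ (i,k) * w $ k)"
    using assms unfolding cinner_def
    by (auto simp: mult_mat_vec_def scalar_prod_def atLeast0LessThan sum_distrib_left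
        intro!: sum.cong simp: algebra_simps)
  also have "\<dots> = (\<Sum>k<c. \<Sum>i<r. cnj (v $ i) * M $$ (i,k) * w $ k)"
    by (rule sum.swap)
  also have "\<dots> = cinner (adj M *\<^sub>v v) w"
    using assms unfolding cinner_def
    by (auto simp: mult_mat_vec_def scalar_prod_def atLeast0LessThan sum_distrib_right
        sum_conjugate sum_distrib_left intro!: sum.cong simp: algebra_simps)
  finally show ?thesis .
qed



lemma idx_mult: "A \<in> carrier_mat r k \<Longrightarrow> B \<in> carrier_mat k c \<Longrightarrow> i < r \<Longrightarrow> j < c \<Longrightarrow>
  (A * B) $$ (i,j) = (\<Sum>l<k. A $$ (i,l) * B $$ (l,j))"
  by (auto simp: index_mult_mat scalar_prod_def atLeast0LessThan intro!: sum.cong)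

lemma idx_mult_vec: "A \<in> carrier_mat r k \<Longrightarrow> v \<in> carrier_vec k \<Longrightarrow> i < r \<Longrightarrow>
  (A *\<^sub>v v) $ i = (\<Sum>l<k. A $$ (i,l) * v $ l)"
  by (auto simp: mult_mat_vec_def scalar_prod_def atLeast0LessThan intro!: sum.cong)

definition diagm :: "nat \<Rightarrow> (nat \<Rightarrow> complex) \<Rightarrow> complex mat" where
  "diagm n f = mat n n (\<lambda>(i,j). if i = j then f i else 0)"

lemma diagm_carrier[simp]: "diagm n f \<in> carrier_mat n n"
  unfolding diagm_def by simp
lemma diagm_dims[simp]: "dim_row (diagm n f) = n" "dim_col (diagm n f) = n"
  unfolding diagm_def by simp_all
lemma index_diagm[simp]: "i < n \<Longrightarrow> j < n \<Longrightarrow> diagm n f $$ (i,j) = (if i = j then f i else 0)"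
  unfolding diagm_def by simp

lemma mult_diagm: "X \<in> carrier_mat r n \<Longrightarrow> i < r \<Longrightarrow> j < n \<Longrightarrow> (X * diagm n f) $$ (i,j) = X $$ (i,j) * f j"
proof -
  assume a: "X \<in> carrier_mat r n" "i < r" "j < n"
  then have "(X * diagm n f) $$ (i,j) = (\<Sum>l<n. X $$ (i,l) * (if l = j then f l else 0))"
    by (subst idx_mult[of _ r n _ n]) auto
  also have "\<dots> = (\<Sum>l<n. if l = j then X $$ (i,l) * f l else 0)"
    by (rule sum.cong) auto
  also have "\<dots> = X $$ (i,j) * f j" using a by simp
  finally show ?thesis .
qed

lemma diagm_mult: "X \<in> carrier_mat n c \<Longrightarrow> i < n \<Longrightarrow> j < c \<Longrightarrow> (diagm n f * X) $$ (i,j) = f i * X $$ (i,j)"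
proof -
  assume a: "X \<in> carrier_mat n c" "i < n" "j < c"
  then have "(diagm n f * X) $$ (i,j) = (\<Sum>l<n. (if i = l then f i else 0) * X $$ (l,j))"
    by (subst idx_mult[of _ n n _ c]) auto
  also have "\<dots> = (\<Sum>l<n. if l = i then f i * X $$ (l,j) else 0)"
    by (rule sum.cong) auto
  also have "\<dots> = f i * X $$ (i,j)" using a by simp
  finally show ?thesis .
qed

lemma eigen_exists: assumes A: "(A :: complex mat) \<in> carrier_mat n n" and n: "0 < n"
  shows "\<exists>k v. eigenvector A v k"
proof -
  have "degree (char_poly A) = n" using degree_monic_char_poly[OF A] by blast
  then have "degree (char_poly A) \<noteq> 0" using n by simp
  then have "\<not> Fundamental_Theorem_Algebra.constant (poly (char_poly A))"
    using constant_degree[of "char_poly A"] by simp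
  then obtain z where "poly (char_poly A) z = 0" using fundamental_theorem_of_algebra by blast
  then have "eigenvalue A z" using eigenvalue_root_char_poly[OF A] by simp
  thus ?thesis by (auto simp: eigenvalue_def)
qed

lemma cnj_z_z: "cnj z * z = complex_of_real ((cmod z)\<^sup>2)"
  by (metis complex_norm_square mult.commute)

lemma cinner_self: "v \<in> carrier_vec n \<Longrightarrow> cinner v v = complex_of_real (\<Sum>i<n. (cmod (v$i))\<^sup>2)"
  unfolding cinner_def by (simp add: cnj_z_z)

lemma cinner_self_pos: assumes v: "v \<in> carrier_vec n" "v \<noteq> 0\<^sub>v n"
  shows "0 < (\<Sum>i<n. (cmod (v$i))\<^sup>2)"
proof -
  obtain i where i: "i < n" "v $ i \<noteq> 0"
    using v by (metis carrier_vecD eq_vecI index_zero_vec(1) index_zero_vec(2))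
  have "(cmod (v$i))\<^sup>2 \<le> (\<Sum>i<n. (cmod (v$i))\<^sup>2)"
    by (rule member_le_sum) (use i in auto)
  moreover have "0 < (cmod (v$i))\<^sup>2" using i by simp
  ultimately show ?thesis by linarith
qed

lemma unit_eigen: assumes A: "A \<in> carrier_mat n n" and ev: "eigenvector A v k" and n: "0 < n"
  shows "\<exists>u r. eigenvector A u k \<and> cinner u u = 1 \<and> u $ 0 = complex_of_real r \<and> r \<le> 0"
proof -
  have v: "v \<in> carrier_vec n" "v \<noteq> 0\<^sub>v n" and Av: "A *\<^sub>v v = k \<cdot>\<^sub>v v"
    using ev A unfolding eigenvector_def by auto
  define s where "s = (\<Sum>i<n. (cmod (v$i))\<^sup>2)"
  have s: "0 < s" using cinner_self_pos[OF v] s_def by simp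
  define ph where "ph = (if v$0 = 0 then 1 else - cnj (v$0) / complex_of_real (cmod (v$0)))"
  have ph: "cmod ph = 1" unfolding ph_def by (auto simp: norm_divide)
  define c where "c = ph / complex_of_real (sqrt s)"
  have c0: "c \<noteq> 0" using ph s unfolding c_def by auto
  have cc: "cnj c * c = complex_of_real (1 / s)"
  proof -
    have "cnj c * c = complex_of_real ((cmod c)\<^sup>2)" by (rule cnj_z_z)
    moreover have "cmod c = 1 / sqrt s" using ph s unfolding c_def by (simp add: norm_divide)
    ultimately show ?thesis using s by (simp add: power_divide)
  qed
  define u where "u = c \<cdot>\<^sub>v v"
  have uc: "u \<in> carrier_vec n" using v unfolding u_def by simp
  have u0: "u \<noteq> 0\<^sub>v n"
  proof
    assume "u = 0\<^sub>v n"
    then have "\<And>i. i < n \<Longrightarrow> c * v $ i = 0" unfolding u_def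
      by (metis index_smult_vec(1) index_zero_vec(1) v(1) carrier_vecD)
    then have "v = 0\<^sub>v n" using c0 v by (intro eq_vecI) auto
    then show False using v by simp
  qed
  have Au: "A *\<^sub>v u = k \<cdot>\<^sub>v u"
    unfolding u_def using A v Av by (simp add: mult_mat_vec smult_smult_assoc mult.commute)
  have evu: "eigenvector A u k" unfolding eigenvector_def using uc u0 Au A by auto
  have "cinner u u = cnj c * c * cinner v v"
    unfolding cinner_def u_def using v by (auto simp: sum_distrib_left algebra_simps)
  also have "\<dots> = 1" using cc cinner_self[OF v(1)] s unfolding s_def[symmetric]
    by (simp flip: of_real_mult)
  finally have uu: "cinner u u = 1" .
  define r where "r = - cmod (v$0) / sqrt s"
  have "u $ 0 = complex_of_real r"
  proof (cases "v $ 0 = 0")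
    case True then show ?thesis using n v unfolding u_def r_def by auto
  next
    case False
    have "u $ 0 = c * v $ 0" using n v unfolding u_def by auto
    also have "\<dots> = - (cnj (v$0) * v$0) / complex_of_real (cmod (v$0)) / complex_of_real (sqrt s)"
      unfolding c_def ph_def using False by simp
    also have "cnj (v$0) * v$0 = complex_of_real ((cmod (v$0))\<^sup>2)"
      by (rule cnj_z_z)
    finally show ?thesis unfolding r_def using False by (simp add: power2_eq_square)
  qed
  moreover have "r \<le> 0" unfolding r_def using s by simp
  ultimately show ?thesis using evu uu by blast
qed



lemma householder:
  assumes u: "u \<in> carrier_vec n" "cinner u u = 1" "u $ 0 = complex_of_real r" "r \<le> 0" and n: "0 < n"
  shows "\<exists>H \<in> carrier_mat n n. adj H * H = 1\<^sub>m n \<and> (\<forall>i<n. H $$ (i,0) = u $ i)"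
proof -
  define w where "w = (\<lambda>i. u $ i - (if i = 0 then 1 else 0))"
  define c where "c = complex_of_real (1 / (1 - r))"
  define H where "H = mat n n (\<lambda>(i,j). (if i = j then 1 else 0) - c * w i * cnj (w j))"
  have Hc: "H \<in> carrier_mat n n" unfolding H_def by simp
  have cc: "cnj c = c" unfolding c_def by simp
  have r1: "1 - r \<noteq> 0" using u by simp
  have s: "(\<Sum>k<n. cnj (w k) * w k) = 2 - 2 * complex_of_real r"
  proof -
    have "(\<Sum>k<n. cnj (w k) * w k) = (\<Sum>k<n. cnj (u $ k) * u $ k - (if k = 0 then cnj (u $ k) + u $ k - 1 else 0))"
      by (rule sum.cong) (auto simp: w_def algebra_simps)
    also have "\<dots> = (\<Sum>k<n. cnj (u $ k) * u $ k) - (cnj (u $ 0) + u $ 0 - 1)"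
      using n by (simp add: sum_subtractf)
    also have "\<dots> = 2 - 2 * complex_of_real r"
      using u unfolding cinner_def by simp
    finally show ?thesis .
  qed
  have cs: "c * (2 - 2 * complex_of_real r) = 2"
  proof -
    have "c * (2 - 2 * complex_of_real r) = complex_of_real (1 / (1 - r) * (2 - 2 * r))"
      unfolding c_def by simp
    also have "1 / (1 - r) * (2 - 2 * r) = 2" using r1 by (simp add: field_simps)
    finally show ?thesis by simp
  qed
  have H0: "\<forall>i<n. H $$ (i,0) = u $ i"
  proof (intro allI impI)
    fix i assume i: "i < n"
    have w0: "cnj (w 0) = complex_of_real r - 1" unfolding w_def using u by simp
    have "c * (complex_of_real r - 1) = complex_of_real (1 / (1 - r) * (r - 1))"
      unfolding c_def by simp
    also have "1 / (1 - r) * (r - 1) = -1" using r1 by (simp add: field_simps)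
    finally have "c * (complex_of_real r - 1) = -1" by simp
    then have "c * w i * cnj (w 0) = - w i" unfolding w0
      by (metis mult.assoc mult.commute mult_minus1_right)
    then show "H $$ (i,0) = u $ i" unfolding H_def using i n by (simp add: w_def)
  qed
  have "adj H * H = 1\<^sub>m n"
  proof (rule eq_matI)
    fix i j assume "i < dim_row (1\<^sub>m n)" "j < dim_col (1\<^sub>m n)"
    then have i: "i < n" and j: "j < n" by auto
    have "(adj H * H) $$ (i,j) = (\<Sum>k<n. cnj (H $$ (k,i)) * H $$ (k,j))"
      using Hc i j by (subst idx_mult[of _ n n _ n]) auto
    also have "\<dots> = (\<Sum>k<n. (if k = i \<and> k = j then 1 else 0) - (if k = i then c * w i * cnj (w j) else 0)
        - (if k = j then c * cnj (w j) * w i else 0) + c^2 * w i * cnj (w j) * (cnj (w k) * w k))"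
    proof (rule sum.cong[OF refl])
      fix k assume "k \<in> {..<n}"
      then have k: "k < n" by simp
      have e: "cnj (H $$ (k,i)) = (if k = i then 1 else 0) - c * cnj (w k) * w i"
        "H $$ (k,j) = (if k = j then 1 else 0) - c * w k * cnj (w j)"
        unfolding H_def using i j k cc by auto
      show "cnj (H $$ (k,i)) * H $$ (k,j) = (if k = i \<and> k = j then 1 else 0) - (if k = i then c * w i * cnj (w j) else 0)
        - (if k = j then c * cnj (w j) * w i else 0) + c^2 * w i * cnj (w j) * (cnj (w k) * w k)"
        unfolding e by (cases "k = i"; cases "k = j") (auto simp: algebra_simps power2_eq_square)
    qed
    also have "\<dots> = (if i = j then 1 else 0) - c * w i * cnj (w j) - c * cnj (w j) * w i
        + c^2 * w i * cnj (w j) * (\<Sum>k<n. cnj (w k) * w k)"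
    proof -
      have "(\<Sum>k<n. if k = i \<and> k = j then 1 else 0) = (if i = j then 1 else (0::complex))"
        using i by (cases "i = j") (auto intro!: sum.neutral)
      then show ?thesis using i j by (simp add: sum.distrib sum_subtractf sum_distrib_left)
    qed
    also have "\<dots> = (if i = j then 1 else 0) - 2 * (c * w i * cnj (w j))
        + c^2 * w i * cnj (w j) * (2 - 2 * complex_of_real r)"
      unfolding s by (simp add: algebra_simps)
    also have "c^2 * w i * cnj (w j) * (2 - 2 * complex_of_real r) = (c * (2 - 2 * complex_of_real r)) * (c * w i * cnj (w j))"
      by (simp add: power2_eq_square mult_ac)
    also have "\<dots> = 2 * (c * w i * cnj (w j))" using cs by simp
    also have "(if i = j then 1 else 0) - 2 * (c * w i * cnj (w j)) + 2 * (c * w i * cnj (w j)) = (if i = j then 1 else 0)"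
      by simp
    finally show "(adj H * H) $$ (i,j) = 1\<^sub>m n $$ (i,j)" using i j by simp
  qed (use Hc in auto)
  then show ?thesis using Hc H0 by blast
qed



lemma spectral:
  "A \<in> carrier_mat n n \<Longrightarrow> adj A = A \<Longrightarrow>
   \<exists>U f. U \<in> carrier_mat n n \<and> adj U * U = 1\<^sub>m n \<and> A * U = U * diagm n f"
proof (induct n arbitrary: A)
  case 0
  have "A * 1\<^sub>m 0 = 1\<^sub>m 0 * diagm 0 (\<lambda>_. 0)"
    using 0 by (intro eq_matI) auto
  then show ?case by (intro exI[of _ "1\<^sub>m 0"] exI[of _ "\<lambda>_. 0"]) auto
next
  case (Suc m A)
  define n where "n = Suc m"
  have A: "A \<in> carrier_mat n n" and hA: "adj A = A" using Suc n_def by auto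
  have n: "0 < n" unfolding n_def by simp
  obtain k v where "eigenvector A v k" using eigen_exists[OF A n] by blast
  then obtain u r where eu: "eigenvector A u k" and uu: "cinner u u = 1"
    and u0: "u $ 0 = complex_of_real r" and r: "r \<le> 0"
    using unit_eigen[OF A _ n] by blast
  have u: "u \<in> carrier_vec n" and Au: "A *\<^sub>v u = k \<cdot>\<^sub>v u"
    using eu A unfolding eigenvector_def by auto
  obtain H where H: "H \<in> carrier_mat n n" and HH: "adj H * H = 1\<^sub>m n"
    and H0: "\<forall>i<n. H $$ (i,0) = u $ i"
    using householder[OF u uu u0 r n] by blast
  have aH: "adj H \<in> carrier_mat n n" using H by auto
  have HH': "H * adj H = 1\<^sub>m n" using mat_mult_left_right_inverse[OF aH H HH] .
  define C where "C = adj H * (A * H)"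
  have Cc: "C \<in> carrier_mat n n" unfolding C_def using H A by auto
  have hC: "adj C = C"
  proof -
    have AHc: "A * H \<in> carrier_mat n n" using A H by simp
    have "adj C = adj (A * H) * adj (adj H)" unfolding C_def by (rule adj_mult[OF aH AHc])
    also have "\<dots> = (adj H * adj A) * H" using adj_mult[OF A H] by simp
    also have "\<dots> = C" unfolding C_def hA using aH A H by simp
    finally show ?thesis .
  qed
  have AH0: "(A * H) $$ (l,0) = k * H $$ (l,0)" if l: "l < n" for l
  proof -
    have "(A * H) $$ (l,0) = (\<Sum>m<n. A $$ (l,m) * u $ m)"
      using A H l n H0 by (subst idx_mult[of _ n n _ n]) auto
    also have "\<dots> = (A *\<^sub>v u) $ l" using A u l by (subst idx_mult_vec[of _ n n]) auto
    also have "\<dots> = k * H $$ (l,0)" using Au u l H0 by simp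
    finally show ?thesis .
  qed
  have C0: "C $$ (i,0) = (if i = 0 then k else 0)" if i: "i < n" for i
  proof -
    have "C $$ (i,0) = (\<Sum>l<n. adj H $$ (i,l) * (A * H) $$ (l,0))"
      unfolding C_def using A H i n by (subst idx_mult[of _ n n _ n]) auto
    also have "\<dots> = k * (\<Sum>l<n. adj H $$ (i,l) * H $$ (l,0))"
      using AH0 by (simp add: sum_distrib_left mult_ac)
    also have "(\<Sum>l<n. adj H $$ (i,l) * H $$ (l,0)) = (adj H * H) $$ (i,0)"
      using H i n by (subst idx_mult[of _ n n _ n]) auto
    finally show ?thesis using HH i n by simp
  qed
  have kr: "cnj k = k"
  proof -
    have "C $$ (0,0) = adj C $$ (0,0)" using hC by simp
    then show ?thesis using C0[OF n] Cc n by simp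
  qed
  have C0': "C $$ (0,j) = (if j = 0 then k else 0)" if j: "j < n" for j
  proof -
    have "C $$ (0,j) = adj C $$ (0,j)" using hC by simp
    also have "\<dots> = cnj (C $$ (j,0))" using Cc j n by simp
    finally show ?thesis using C0[OF j] kr by simp
  qed
  define B where "B = mat m m (\<lambda>(i,j). C $$ (Suc i, Suc j))"
  have Bc: "B \<in> carrier_mat m m" unfolding B_def by simp
  have hB: "adj B = B"
  proof (rule eq_matI)
    fix i j assume "i < dim_row B" "j < dim_col B"
    then have i: "i < m" and j: "j < m" using Bc by auto
    have "adj B $$ (i,j) = cnj (C $$ (Suc j, Suc i))" using i j unfolding B_def by simp
    also have "\<dots> = adj C $$ (Suc i, Suc j)" using i j Cc n_def by simp
    finally show "adj B $$ (i,j) = B $$ (i,j)" using hC i j unfolding B_def by simp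
  qed (use Bc in auto)
  obtain V g where V: "V \<in> carrier_mat m m" and VV: "adj V * V = 1\<^sub>m m"
    and BV: "B * V = V * diagm m g"
    using Suc(1)[OF Bc hB] by blast
  define U' where "U' = mat n n (\<lambda>(i,j). if i = 0 then (if j = 0 then 1 else 0)
      else if j = 0 then 0 else V $$ (i-1, j-1))"
  define f where "f = (\<lambda>j. if j = 0 then k else g (j-1))"
  have U'c: "U' \<in> carrier_mat n n" unfolding U'_def by simp
  have U'00: "U' $$ (0, 0) = 1" unfolding U'_def n_def by simp
  have U'e0: "U' $$ (0, Suc j) = 0" "U' $$ (Suc j, 0) = 0" if "j < m" for j
    using that unfolding U'_def n_def by auto
  have U'e1: "U' $$ (Suc i, Suc j) = V $$ (i,j)" if "i < m" "j < m" for i j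
    using that unfolding U'_def n_def by auto
  have sumsplit: "(\<Sum>l<n. F l) = F 0 + (\<Sum>l<m. F (Suc l))" for F :: "nat \<Rightarrow> complex"
    unfolding n_def by (rule sum.lessThan_Suc_shift)
  have U'U': "adj U' * U' = 1\<^sub>m n"
  proof (rule eq_matI)
    fix i j assume "i < dim_row (1\<^sub>m n)" "j < dim_col (1\<^sub>m n)"
    then have i: "i < n" and j: "j < n" by auto
    have "(adj U' * U') $$ (i,j) = (\<Sum>l<n. cnj (U' $$ (l,i)) * U' $$ (l,j))"
      using U'c i j by (subst idx_mult[of _ n n _ n]) auto
    also have "\<dots> = cnj (U' $$ (0,i)) * U' $$ (0,j) + (\<Sum>l<m. cnj (U' $$ (Suc l,i)) * U' $$ (Suc l,j))"
      by (rule sumsplit)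
    also have "\<dots> = 1\<^sub>m n $$ (i,j)"
    proof (cases i)
      case 0
      then show ?thesis using j U'e0 U'e1 U'00 n_def by (cases j) auto
    next
      case (Suc i')
      then have i': "i' < m" using i n_def by simp
      show ?thesis
      proof (cases j)
        case 0
        then show ?thesis using Suc i' U'e0 U'e1 U'00 n_def by auto
      next
        case (Suc j')
        then have j': "j' < m" using j n_def by simp
        have "(\<Sum>l<m. cnj (U' $$ (Suc l,i)) * U' $$ (Suc l,j)) = (\<Sum>l<m. cnj (V $$ (l,i')) * V $$ (l,j'))"
          using \<open>i = Suc i'\<close> Suc i' j' U'e0 U'e1 U'00 by (intro sum.cong) auto
        also have "\<dots> = (adj V * V) $$ (i',j')"
          using V i' j' by (subst idx_mult[of _ m m _ m]) auto
        finally show ?thesis using VV \<open>i = Suc i'\<close> Suc i' j' U'e0 U'e1 U'00 n_def by auto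
      qed
    qed
    finally show "(adj U' * U') $$ (i,j) = 1\<^sub>m n $$ (i,j)" .
  qed (use U'c in auto)
  have CU': "C * U' = U' * diagm n f"
  proof (rule eq_matI)
    fix i j assume "i < dim_row (U' * diagm n f)" "j < dim_col (U' * diagm n f)"
    then have i: "i < n" and j: "j < n" using U'c by auto
    have "(C * U') $$ (i,j) = (\<Sum>l<n. C $$ (i,l) * U' $$ (l,j))"
      using U'c Cc i j by (subst idx_mult[of _ n n _ n]) auto
    also have "\<dots> = C $$ (i,0) * U' $$ (0,j) + (\<Sum>l<m. C $$ (i,Suc l) * U' $$ (Suc l,j))"
      by (rule sumsplit)
    also have "\<dots> = U' $$ (i,j) * f j"
    proof (cases j)
      case 0
      then show ?thesis using i C0 U'e0 U'e1 U'00 n_def f_def by (cases i) auto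
    next
      case (Suc j')
      then have j': "j' < m" using j n_def by simp
      show ?thesis
      proof (cases i)
        case 0
        then show ?thesis using Suc j' C0' U'e0 U'e1 U'00 n_def by auto
      next
        case (Suc i')
        then have i': "i' < m" using i n_def by simp
        have "(\<Sum>l<m. C $$ (i,Suc l) * U' $$ (Suc l,j)) = (\<Sum>l<m. B $$ (i',l) * V $$ (l,j'))"
          using \<open>j = Suc j'\<close> Suc i' j' U'e0 U'e1 U'00 unfolding B_def by (intro sum.cong) auto
        also have "\<dots> = (B * V) $$ (i',j')"
          using V Bc i' j' by (subst idx_mult[of _ m m _ m]) auto
        also have "\<dots> = V $$ (i',j') * g j'" using BV mult_diagm[OF V i' j'] by simp
        finally show ?thesis using \<open>j = Suc j'\<close> Suc i' j' U'e0 U'e1 U'00 n_def f_def by auto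
      qed
    qed
    also have "\<dots> = (U' * diagm n f) $$ (i,j)" using mult_diagm[OF U'c i j] by simp
    finally show "(C * U') $$ (i,j) = (U' * diagm n f) $$ (i,j)" .
  qed (use U'c Cc in auto)
  define U where "U = H * U'"
  have Uc: "U \<in> carrier_mat n n" unfolding U_def using H U'c by simp
  have aU': "adj U' \<in> carrier_mat n n" using U'c by auto
  have HU'c: "H * U' \<in> carrier_mat n n" using H U'c by simp
  have "adj U * U = (adj U' * adj H) * (H * U')"
    unfolding U_def using adj_mult[OF H U'c] by simp
  also have "\<dots> = adj U' * (adj H * (H * U'))" by (rule assoc_mult_mat[OF aU' aH HU'c])
  also have "adj H * (H * U') = (adj H * H) * U'" by (rule assoc_mult_mat[OF aH H U'c, symmetric])
  also have "\<dots> = U'" using HH U'c by simp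
  also have "adj U' * U' = 1\<^sub>m n" by (rule U'U')
  finally have UU: "adj U * U = 1\<^sub>m n" .
  have HC: "H * C = A * H"
  proof -
    have AHc: "A * H \<in> carrier_mat n n" using A H by simp
    have "H * C = (H * adj H) * (A * H)" unfolding C_def by (rule assoc_mult_mat[OF H aH AHc, symmetric])
    also have "\<dots> = A * H" using HH' A H by simp
    finally show ?thesis .
  qed
  have "A * U = (A * H) * U'" unfolding U_def by (rule assoc_mult_mat[OF A H U'c, symmetric])
  also have "\<dots> = (H * C) * U'" using HC by simp
  also have "\<dots> = H * (C * U')" by (rule assoc_mult_mat[OF H Cc U'c])
  also have "\<dots> = H * U' * diagm n f" unfolding CU' by (rule assoc_mult_mat[OF H U'c diagm_carrier, symmetric])
  also have "H * U' = U" unfolding U_def ..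
  finally have AU: "A * U = U * diagm n f" .
  show ?case unfolding n_def[symmetric] using Uc UU AU by blast
qed



definition conjd :: "complex mat \<Rightarrow> (nat \<Rightarrow> complex) \<Rightarrow> complex mat" where
  "conjd U a = U * diagm (dim_row U) a * adj U"

lemma diagm_mult_diagm: "diagm n a * diagm n b = diagm n (\<lambda>k. a k * b k)"
proof (rule eq_matI)
  fix i j assume "i < dim_row (diagm n (\<lambda>k. a k * b k))" "j < dim_col (diagm n (\<lambda>k. a k * b k))"
  then have i: "i < n" and j: "j < n" by auto
  show "(diagm n a * diagm n b) $$ (i, j) = diagm n (\<lambda>k. a k * b k) $$ (i, j)"
    using mult_diagm[OF diagm_carrier i j, of a b] i j by simp
qed auto

lemma conjd_carrier: "U \<in> carrier_mat n n \<Longrightarrow> conjd U a \<in> carrier_mat n n"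
  unfolding conjd_def by auto

lemma conjd_mult: assumes U: "U \<in> carrier_mat n n" and UU: "adj U * U = 1\<^sub>m n"
  shows "conjd U a * conjd U b = conjd U (\<lambda>k. a k * b k)"
proof -
  have aU: "adj U \<in> carrier_mat n n" using U by auto
  have Da: "diagm n a \<in> carrier_mat n n" and Db: "diagm n b \<in> carrier_mat n n" by auto
  have UDa: "U * diagm n a \<in> carrier_mat n n" using U by simp
  have UDb: "U * diagm n b \<in> carrier_mat n n" using U by simp
  have DbU: "diagm n b * adj U \<in> carrier_mat n n" using mult_carrier_mat[OF Db aU] .
  have UDbU: "U * diagm n b * adj U \<in> carrier_mat n n" using mult_carrier_mat[OF UDb aU] .
  have r: "dim_row U = n" using U by simp
  have "adj U * (U * diagm n b * adj U) = (adj U * (U * diagm n b)) * adj U"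
    by (rule assoc_mult_mat[OF aU UDb aU, symmetric])
  also have "adj U * (U * diagm n b) = (adj U * U) * diagm n b"
    by (rule assoc_mult_mat[OF aU U Db, symmetric])
  also have "\<dots> = diagm n b" using UU by simp
  finally have e1: "adj U * (U * diagm n b * adj U) = diagm n b * adj U" .
  have "conjd U a * conjd U b = (U * diagm n a) * (adj U * (U * diagm n b * adj U))"
    unfolding conjd_def r by (rule assoc_mult_mat[OF UDa aU UDbU])
  also have "\<dots> = (U * diagm n a) * (diagm n b * adj U)" unfolding e1 ..
  also have "\<dots> = U * (diagm n a * (diagm n b * adj U))" by (rule assoc_mult_mat[OF U Da DbU])
  also have "diagm n a * (diagm n b * adj U) = (diagm n a * diagm n b) * adj U"
    by (rule assoc_mult_mat[OF Da Db aU, symmetric])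
  also have "U * \<dots> = (U * (diagm n a * diagm n b)) * adj U"
    by (rule assoc_mult_mat[OF U mult_carrier_mat[OF Da Db] aU, symmetric])
  finally show ?thesis unfolding conjd_def r diagm_mult_diagm .
qed

lemma adj_diagm: "adj (diagm n a) = diagm n (\<lambda>k. cnj (a k))"
  by (rule eq_matI) auto

lemma conjd_adj: assumes U: "U \<in> carrier_mat n n"
  shows "adj (conjd U a) = conjd U (\<lambda>k. cnj (a k))"
proof -
  have aU: "adj U \<in> carrier_mat n n" using U by auto
  have UD: "U * diagm n a \<in> carrier_mat n n" using U by simp
  have r: "dim_row U = n" using U by simp
  have "adj (U * diagm n a * adj U) = adj (adj U) * adj (U * diagm n a)" by (rule adj_mult[OF UD aU])
  also have "adj (U * diagm n a) = adj (diagm n a) * adj U" by (rule adj_mult[OF U diagm_carrier])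
  also have "adj (adj U) * (adj (diagm n a) * adj U) = (U * adj (diagm n a)) * adj U"
  proof -
    have Dc: "adj (diagm n a) \<in> carrier_mat n n" by (simp add: adj_diagm)
    show ?thesis using assoc_mult_mat[OF U Dc aU] by simp
  qed
  finally show ?thesis unfolding conjd_def r adj_diagm .
qed

lemma conjd_add: assumes U: "U \<in> carrier_mat n n"
  shows "conjd U a + conjd U b = conjd U (\<lambda>k. a k + b k)"
proof -
  have aU: "adj U \<in> carrier_mat n n" using U by auto
  have r: "dim_row U = n" using U by simp
  have "diagm n a + diagm n b = diagm n (\<lambda>k. a k + b k)" by (rule eq_matI) auto
  moreover have "U * diagm n a * adj U + U * diagm n b * adj U = U * (diagm n a + diagm n b) * adj U"
  proof -
    have Da: "diagm n a \<in> carrier_mat n n" and Db: "diagm n b \<in> carrier_mat n n" by auto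
    have UDa: "U * diagm n a \<in> carrier_mat n n" and UDb: "U * diagm n b \<in> carrier_mat n n" using U by auto
    show ?thesis unfolding mult_add_distrib_mat[OF U Da Db] add_mult_distrib_mat[OF UDa UDb aU] ..
  qed
  ultimately show ?thesis unfolding conjd_def r by simp
qed

lemma conjd_one: assumes U: "U \<in> carrier_mat n n" and UU: "adj U * U = 1\<^sub>m n"
  shows "conjd U (\<lambda>k. 1) = 1\<^sub>m n"
proof -
  have aU: "adj U \<in> carrier_mat n n" using U by auto
  have "diagm n (\<lambda>k. 1) = 1\<^sub>m n" by (rule eq_matI) auto
  then have "conjd U (\<lambda>k. 1) = U * adj U" unfolding conjd_def using U by simp
  also have "\<dots> = 1\<^sub>m n" by (rule mat_mult_left_right_inverse[OF aU U UU])
  finally show ?thesis .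
qed

lemma conjd_spec: assumes U: "U \<in> carrier_mat n n" and UU: "adj U * U = 1\<^sub>m n"
  and A: "A \<in> carrier_mat n n" and AU: "A * U = U * diagm n f"
  shows "A = conjd U f"
proof -
  have aU: "adj U \<in> carrier_mat n n" using U by auto
  have UU': "U * adj U = 1\<^sub>m n" by (rule mat_mult_left_right_inverse[OF aU U UU])
  have "A = A * (U * adj U)" using A UU' by simp
  also have "\<dots> = (A * U) * adj U" by (rule assoc_mult_mat[OF A U aU, symmetric])
  finally show ?thesis unfolding conjd_def AU using U by simp
qed

lemma eigen_col: assumes U: "U \<in> carrier_mat n n" and UU: "adj U * U = 1\<^sub>m n"
  and A: "A \<in> carrier_mat n n" and AU: "A * U = U * diagm n f" and k: "k < n"
  shows "eigenvalue A (f k)"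
proof -
  have c: "col U k \<in> carrier_vec n" using U by auto
  have "A *\<^sub>v col U k = col (A * U) k" by (rule col_mult2[OF A U k, symmetric])
  also have "\<dots> = col (U * diagm n f) k" unfolding AU ..
  also have "\<dots> = f k \<cdot>\<^sub>v col U k"
  proof (rule eq_vecI)
    fix i assume "i < dim_vec (f k \<cdot>\<^sub>v col U k)"
    then have i: "i < n" using U by simp
    show "col (U * diagm n f) k $ i = (f k \<cdot>\<^sub>v col U k) $ i"
      using mult_diagm[OF U i k, of f] U i k by simp
  qed (use U in simp)
  finally have ev: "A *\<^sub>v col U k = f k \<cdot>\<^sub>v col U k" .
  have nz: "col U k \<noteq> 0\<^sub>v n"
  proof
    assume z: "col U k = 0\<^sub>v n"
    have "(adj U * U) $$ (k,k) = (\<Sum>l<n. cnj (U $$ (l,k)) * U $$ (l,k))"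
      using U k by (subst idx_mult[of _ n n _ n]) auto
    also have "\<dots> = 0"
    proof (rule sum.neutral, intro ballI)
      fix l assume "l \<in> {..<n}"
      then have "U $$ (l,k) = 0" using z U k
        by (metis carrier_matD(1) col_def index_vec index_zero_vec(1) lessThan_iff)
      then show "cnj (U $$ (l,k)) * U $$ (l,k) = 0" by simp
    qed
    finally show False using UU k by simp
  qed
  show ?thesis unfolding eigenvalue_def eigenvector_def using c nz ev A by auto
qed

lemma effect_sqrt:
  assumes A: "A \<in> carrier_mat d d" and hA: "adj A = A"
    and sp: "spectrum A \<subseteq> complex_of_real ` {0..1}"
  shows "\<exists>R T. R \<in> carrier_mat d d \<and> T \<in> carrier_mat d d \<and> R * adj R = A \<and>
     adj R * R + adj T * T = 1\<^sub>m d"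
proof -
  obtain U f where U: "U \<in> carrier_mat d d" and UU: "adj U * U = 1\<^sub>m d" and AU: "A * U = U * diagm d f"
    using spectral[OF A hA] by blast
  have fk: "\<exists>t. f k = complex_of_real t \<and> 0 \<le> t \<and> t \<le> 1" if k: "k < d" for k
  proof -
    have "f k \<in> spectrum A" using eigen_col[OF U UU A AU k] unfolding spectrum_def by simp
    then show ?thesis using sp by auto
  qed
  define lam where "lam = (\<lambda>k. Re (f k))"
  have lam: "f k = complex_of_real (lam k)" "0 \<le> lam k" "lam k \<le> 1" if "k < d" for k
    using fk[OF that] unfolding lam_def by auto
  have Aeq: "A = conjd U f" by (rule conjd_spec[OF U UU A AU])
  define a where "a = (\<lambda>k. complex_of_real (sqrt (lam k)))"
  define b where "b = (\<lambda>k. complex_of_real (sqrt (1 - lam k)))"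
  define R where "R = conjd U a"
  define T where "T = conjd U b"
  have Rc: "R \<in> carrier_mat d d" and Tc: "T \<in> carrier_mat d d"
    unfolding R_def T_def using conjd_carrier[OF U] by auto
  have aR: "adj R = R" unfolding R_def conjd_adj[OF U] a_def by simp
  have aT: "adj T = T" unfolding T_def conjd_adj[OF U] b_def by simp
  have cong: "conjd U g = conjd U h" if "\<And>k. k < d \<Longrightarrow> g k = h k" for g h
  proof -
    have "diagm d g = diagm d h" using that by (intro eq_matI) auto
    then show ?thesis unfolding conjd_def using U by simp
  qed
  have "R * adj R = R * R" using aR by simp
  also have "\<dots> = conjd U (\<lambda>k. a k * a k)" unfolding R_def by (rule conjd_mult[OF U UU])
  also have "\<dots> = conjd U f"
    by (rule cong) (simp add: a_def lam flip: of_real_mult)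
  finally have RR: "R * adj R = A" using Aeq by simp
  have "adj R * R + adj T * T = R * R + T * T" using aR aT by simp
  also have "\<dots> = conjd U (\<lambda>k. a k * a k) + conjd U (\<lambda>k. b k * b k)"
    unfolding R_def T_def conjd_mult[OF U UU] ..
  also have "\<dots> = conjd U (\<lambda>k. a k * a k + b k * b k)" by (rule conjd_add[OF U])
  also have "\<dots> = conjd U (\<lambda>k. 1)"
    by (rule cong) (simp add: a_def b_def lam flip: of_real_mult of_real_add)
  also have "\<dots> = 1\<^sub>m d" by (rule conjd_one[OF U UU])
  finally show ?thesis using Rc Tc RR by blast
qed



definition ek :: "nat \<Rightarrow> nat \<Rightarrow> complex mat" where
  "ek N k = mat N 1 (\<lambda>(i,j). if i = k then 1 else 0)"

definition Jm :: "nat \<Rightarrow> nat \<Rightarrow> complex mat" where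
  "Jm N d = kron (ek N 0) (1\<^sub>m d)"

lemma ek_carrier[simp]: "ek N k \<in> carrier_mat N 1"
  unfolding ek_def by simp

lemma ek_dims[simp]: "dim_row (ek N k) = N" "dim_col (ek N k) = 1"
  unfolding ek_def by simp_all

lemma ek_inner: assumes "a < N" "b < N"
  shows "adj (ek N a) * ek N b = (if a = b then 1\<^sub>m 1 else 0\<^sub>m 1 1)"
proof (rule eq_matI)
  fix i j assume "i < dim_row (if a = b then 1\<^sub>m 1 else 0\<^sub>m 1 1)" "j < dim_col (if a = b then 1\<^sub>m 1 else (0\<^sub>m 1 1 :: complex mat))"
  then have ij: "i = 0" "j = 0" by (auto split: if_splits)
  have "(adj (ek N a) * ek N b) $$ (0,0) = (\<Sum>l<N. cnj (ek N a $$ (l,0)) * ek N b $$ (l,0))"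
    by (subst idx_mult[OF adj_carrier2[OF ek_carrier] ek_carrier]) auto
  also have "\<dots> = (\<Sum>l<N. if l = a \<and> l = b then 1 else 0)"
    by (rule sum.cong) (auto simp: ek_def)
  also have "\<dots> = (if a = b then 1 else 0)"
    using assms by (cases "a = b") (auto intro!: sum.neutral)
  finally show "(adj (ek N a) * ek N b) $$ (i, j) = (if a = b then 1\<^sub>m 1 else 0\<^sub>m 1 1) $$ (i, j)"
    using ij by simp
qed auto

lemma kron_one1: "kron (1\<^sub>m 1) M = M"
proof (rule eq_matI)
  fix i j assume "i < dim_row M" "j < dim_col M"
  then show "kron (1\<^sub>m 1) M $$ (i,j) = M $$ (i,j)" by simp
qed auto

lemma kron_one1'[simp]: "kron (1\<^sub>m (Suc 0)) M = M"
  using kron_one1 by simp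

lemma kron_zero1'[simp]: "kron (0\<^sub>m (Suc 0) (Suc 0)) M = 0\<^sub>m (dim_row M) (dim_col M)"
  by (rule eq_matI) auto

lemma kron_zero1: "kron (0\<^sub>m 1 1) M = 0\<^sub>m (dim_row M) (dim_col M)"
  by (rule eq_matI) auto

lemma Jm_carrier: "Jm N d \<in> carrier_mat (N*d) d"
  unfolding Jm_def using kron_carrier[of "ek N 0" "1\<^sub>m d"] by simp

lemma Jm_inner: assumes "0 < N" shows "adj (Jm N d) * Jm N d = 1\<^sub>m d"
proof -
  have "adj (Jm N d) * Jm N d = kron (adj (ek N 0)) (1\<^sub>m d) * kron (ek N 0) (1\<^sub>m d)"
    unfolding Jm_def adj_kron by simp
  also have "\<dots> = kron (adj (ek N 0) * ek N 0) (1\<^sub>m d * 1\<^sub>m d)"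
    by (rule kron_mult[OF adj_carrier2[OF ek_carrier] ek_carrier one_carrier_mat one_carrier_mat])
  also have "\<dots> = 1\<^sub>m d" using ek_inner[of 0 N 0] assms by (simp add: kron_one1)
  finally show ?thesis .
qed

lemma dilation:
  assumes R: "R \<in> carrier_mat d d" and T: "T \<in> carrier_mat d d"
    and RT: "adj R * R + adj T * T = 1\<^sub>m d" and i: "0 < i" "i < N"
  shows "\<exists>E. projection (N*d) E \<and> adj (Jm N d) * E * Jm N d = R * adj R"
proof -
  have N: "0 < N" using i by simp
  define e0 where "e0 = ek N 0"
  define ei where "ei = ek N i"
  have e0: "e0 \<in> carrier_mat N 1" and ei: "ei \<in> carrier_mat N 1" unfolding e0_def ei_def by (rule ek_carrier)+
  have ae0: "adj e0 \<in> carrier_mat 1 N" and aei: "adj ei \<in> carrier_mat 1 N" using e0 ei by auto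
  have aR: "adj R \<in> carrier_mat d d" and aT: "adj T \<in> carrier_mat d d" using R T by auto
  have i00: "adj e0 * e0 = 1\<^sub>m 1" using ek_inner[of 0 N 0] N unfolding e0_def by simp
  have i0i: "adj e0 * ei = 0\<^sub>m 1 1" using ek_inner[of 0 N i] i unfolding e0_def ei_def by simp
  have ii0: "adj ei * e0 = 0\<^sub>m 1 1" using ek_inner[of i N 0] i unfolding e0_def ei_def by simp
  have iii: "adj ei * ei = 1\<^sub>m 1" using ek_inner[of i N i] i unfolding ei_def by simp
  define X1 where "X1 = kron e0 R"
  define X2 where "X2 = kron ei T"
  have X1: "X1 \<in> carrier_mat (N*d) d" and X2: "X2 \<in> carrier_mat (N*d) d"
    unfolding X1_def X2_def using e0 ei R T by auto
  define X where "X = X1 + X2"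
  have Xc: "X \<in> carrier_mat (N*d) d" unfolding X_def using X1 X2 by simp
  have aX1: "adj X1 = kron (adj e0) (adj R)" unfolding X1_def adj_kron ..
  have aX2: "adj X2 = kron (adj ei) (adj T)" unfolding X2_def adj_kron ..
  have aX1c: "adj X1 \<in> carrier_mat d (N*d)" and aX2c: "adj X2 \<in> carrier_mat d (N*d)"
    using X1 X2 by auto
  have aX: "adj X = adj X1 + adj X2" unfolding X_def by (rule adj_add[OF X1 X2])
  have aXc: "adj X \<in> carrier_mat d (N*d)" using Xc by auto
  have p11: "adj X1 * X1 = adj R * R"
    unfolding aX1 unfolding X1_def using kron_mult[OF ae0 e0 aR R] i00 by (simp add: kron_one1)
  have p12: "adj X1 * X2 = 0\<^sub>m d d"
    unfolding aX1 unfolding X2_def using kron_mult[OF ae0 ei aR T] i0i aR T R by (simp add: kron_zero1)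
  have p21: "adj X2 * X1 = 0\<^sub>m d d"
    unfolding aX2 unfolding X1_def using kron_mult[OF aei e0 aT R] ii0 aT R T by (simp add: kron_zero1)
  have p22: "adj X2 * X2 = adj T * T"
    unfolding aX2 unfolding X2_def using kron_mult[OF aei ei aT T] iii by (simp add: kron_one1)
  have XX: "adj X * X = 1\<^sub>m d"
  proof -
    have "adj X * X = (adj X1 + adj X2) * X1 + (adj X1 + adj X2) * X2"
      unfolding aX unfolding X_def by (rule mult_add_distrib_mat[of _ d "N*d"]) (use aX1c aX2c X1 X2 in auto)
    also have "\<dots> = (adj X1 * X1 + adj X2 * X1) + (adj X1 * X2 + adj X2 * X2)"
      using add_mult_distrib_mat[OF aX1c aX2c X1] add_mult_distrib_mat[OF aX1c aX2c X2] by simp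
    also have "\<dots> = adj R * R + adj T * T"
      unfolding p11 p12 p21 p22 using aR R aT T by simp
    finally show ?thesis using RT by simp
  qed
  define J where "J = Jm N d"
  have Jc: "J \<in> carrier_mat (N*d) d" unfolding J_def by (rule Jm_carrier)
  have aJ: "adj J = kron (adj e0) (1\<^sub>m d)" unfolding J_def Jm_def e0_def adj_kron by simp
  have aJc: "adj J \<in> carrier_mat d (N*d)" using Jc by auto
  have JX: "adj J * X = R"
  proof -
    have "adj J * X = adj J * X1 + adj J * X2"
      unfolding X_def by (rule mult_add_distrib_mat[OF aJc X1 X2])
    also have "adj J * X1 = R"
      unfolding aJ X1_def using kron_mult[OF ae0 e0 one_carrier_mat R] i00 R by (simp add: kron_one1)
    also have "adj J * X2 = 0\<^sub>m d d"
      unfolding aJ X2_def using kron_mult[OF ae0 ei one_carrier_mat T] i0i T by (simp add: kron_zero1)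
    finally show ?thesis using R by simp
  qed
  define E where "E = X * adj X"
  have Ec: "E \<in> carrier_mat (N*d) (N*d)" unfolding E_def using Xc aXc by simp
  have hE: "adj E = E" unfolding E_def using adj_mult[OF Xc aXc] by simp
  have EE: "E * E = E"
  proof -
    have "E * E = X * (adj X * (X * adj X))" unfolding E_def by (rule assoc_mult_mat[OF Xc aXc mult_carrier_mat[OF Xc aXc]])
    also have "adj X * (X * adj X) = (adj X * X) * adj X" by (rule assoc_mult_mat[OF aXc Xc aXc, symmetric])
    also have "\<dots> = adj X" using XX left_mult_one_mat[OF aXc] by simp
    finally show ?thesis unfolding E_def .
  qed
  have "adj J * E * J = (adj J * X) * (adj X * J)"
  proof -
    have "adj J * E * J = adj J * (E * J)" by (rule assoc_mult_mat[OF aJc Ec Jc])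
    also have "E * J = X * (adj X * J)" unfolding E_def by (rule assoc_mult_mat[OF Xc aXc Jc])
    also have "adj J * (X * (adj X * J)) = (adj J * X) * (adj X * J)"
      by (rule assoc_mult_mat[OF aJc Xc mult_carrier_mat[OF aXc Jc], symmetric])
    finally show ?thesis .
  qed
  also have "adj X * J = adj (adj J * X)" using adj_mult[OF aJc Xc] by simp
  finally have "adj J * E * J = R * adj R" unfolding JX .
  moreover have "projection (N*d) E" unfolding projection_def hermitian_def using Ec hE EE by simp
  ultimately show ?thesis unfolding J_def by blast
qed



lemma lift_state:
  assumes W: "density (d*d) W" and J: "J \<in> carrier_mat D d" and JJ: "adj J * J = 1\<^sub>m d"
  shows "density (D*D) (kron J J * W * adj (kron J J))"
    and "\<And>P Q. P \<in> carrier_mat D D \<Longrightarrow> Q \<in> carrier_mat D D \<Longrightarrow>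
      mtrace (kron J J * W * adj (kron J J) * kron P Q) = mtrace (W * kron (adj J * P * J) (adj J * Q * J))"
proof -
  define K where "K = kron J J"
  have Kc: "K \<in> carrier_mat (D*D) (d*d)" unfolding K_def using J kron_carrier[of J J] by simp
  have aJ: "adj J \<in> carrier_mat d D" using J by auto
  have aK: "adj K = kron (adj J) (adj J)" unfolding K_def adj_kron ..
  have aKc: "adj K \<in> carrier_mat (d*d) (D*D)" using Kc by auto
  have Wc: "W \<in> carrier_mat (d*d) (d*d)" and hW: "adj W = W"
    using W unfolding density_def psd_def hermitian_def by auto
  have Wpsd: "\<And>v. v \<in> carrier_vec (d*d) \<Longrightarrow> cinner v (W *\<^sub>v v) \<in> \<real> \<and> 0 \<le> Re (cinner v (W *\<^sub>v v))"
    using W unfolding density_def psd_def by auto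
  have trW: "mtrace W = 1" using W unfolding density_def by simp
  have KK: "adj K * K = 1\<^sub>m (d*d)"
    unfolding aK unfolding K_def using kron_mult[OF aJ J aJ J] JJ kron_one by simp
  define W' where "W' = K * W * adj K"
  have KWc: "K * W \<in> carrier_mat (D*D) (d*d)" using Kc Wc by simp
  have W'c: "W' \<in> carrier_mat (D*D) (D*D)" unfolding W'_def using KWc aKc by simp
  have hW': "adj W' = W'"
  proof -
    have "adj W' = adj (adj K) * adj (K * W)" unfolding W'_def by (rule adj_mult[OF KWc aKc])
    also have "adj (K * W) = adj W * adj K" by (rule adj_mult[OF Kc Wc])
    also have "adj (adj K) * (adj W * adj K) = (K * W) * adj K"
      unfolding hW by (simp add: assoc_mult_mat[OF Kc Wc aKc])
    finally show ?thesis unfolding W'_def .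
  qed
  have psdW': "cinner v (W' *\<^sub>v v) \<in> \<real> \<and> 0 \<le> Re (cinner v (W' *\<^sub>v v))" if v: "v \<in> carrier_vec (D*D)" for v
  proof -
    have av: "adj K *\<^sub>v v \<in> carrier_vec (d*d)" using aKc v by simp
    have "W' *\<^sub>v v = K *\<^sub>v (W *\<^sub>v (adj K *\<^sub>v v))"
      unfolding W'_def using assoc_mult_mat_vec[OF KWc aKc v] assoc_mult_mat_vec[OF Kc Wc av] by simp
    then have "cinner v (W' *\<^sub>v v) = cinner (adj K *\<^sub>v v) (W *\<^sub>v (adj K *\<^sub>v v))"
      using cinner_adj[OF Kc v] Wc av by simp
    then show ?thesis using Wpsd[OF av] by simp
  qed
  have trW': "mtrace W' = 1"
  proof -
    have "mtrace W' = mtrace (adj K * (K * W))" unfolding W'_def by (rule mtrace_comm[OF KWc aKc])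
    also have "adj K * (K * W) = (adj K * K) * W" by (rule assoc_mult_mat[OF aKc Kc Wc, symmetric])
    finally show ?thesis using KK Wc trW by simp
  qed
  show "density (D*D) (kron J J * W * adj (kron J J))"
    using W'c hW' psdW' trW' unfolding W'_def K_def density_def psd_def hermitian_def by simp
  fix P Q :: "complex mat" assume P: "P \<in> carrier_mat D D" and Q: "Q \<in> carrier_mat D D"
  define M where "M = kron P Q"
  have Mc: "M \<in> carrier_mat (D*D) (D*D)" unfolding M_def using P Q kron_carrier[of P Q] by simp
  have aKM: "adj K * M \<in> carrier_mat (d*d) (D*D)" using aKc Mc by simp
  have WaKM: "W * (adj K * M) \<in> carrier_mat (d*d) (D*D)" using Wc aKM by simp
  have "W' * M = (K * W) * (adj K * M)" unfolding W'_def by (rule assoc_mult_mat[OF KWc aKc Mc])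
  also have "\<dots> = K * (W * (adj K * M))" by (rule assoc_mult_mat[OF Kc Wc aKM])
  finally have e1: "W' * M = K * (W * (adj K * M))" .
  have "mtrace (W' * M) = mtrace ((W * (adj K * M)) * K)" unfolding e1 by (rule mtrace_comm[OF Kc WaKM])
  also have "(W * (adj K * M)) * K = W * ((adj K * M) * K)" by (rule assoc_mult_mat[OF Wc aKM Kc])
  also have "(adj K * M) * K = kron (adj J * P * J) (adj J * Q * J)"
  proof -
    have "adj K * M = kron (adj J * P) (adj J * Q)" unfolding aK M_def by (rule kron_mult[OF aJ P aJ Q])
    moreover have "adj J * P \<in> carrier_mat d D" "adj J * Q \<in> carrier_mat d D" using aJ P Q by auto
    ultimately show ?thesis unfolding K_def using kron_mult[of "adj J * P" d D J d "adj J * Q" d D J d] J by simp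
  qed
  finally show "mtrace (kron J J * W * adj (kron J J) * kron P Q) = mtrace (W * kron (adj J * P * J) (adj J * Q * J))"
    unfolding W'_def K_def M_def .
qed

lemma projection_psd: assumes "projection d P" shows "psd d P"
proof -
  have Pc: "P \<in> carrier_mat d d" and hP: "adj P = P" and PP: "P * P = P"
    using assms unfolding projection_def hermitian_def by auto
  have "cinner v (P *\<^sub>v v) \<in> \<real> \<and> 0 \<le> Re (cinner v (P *\<^sub>v v))" if v: "v \<in> carrier_vec d" for v
  proof -
    have Pv: "P *\<^sub>v v \<in> carrier_vec d" using Pc v by simp
    have "P *\<^sub>v v = adj P *\<^sub>v (P *\<^sub>v v)" unfolding hP using assoc_mult_mat_vec[OF Pc Pc v] PP by simp
    then have "cinner v (P *\<^sub>v v) = cinner (P *\<^sub>v v) (P *\<^sub>v v)"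
      using cinner_adj[OF adj_carrier2[OF Pc] v Pv] by simp
    moreover have "cinner (P *\<^sub>v v) (P *\<^sub>v v) = complex_of_real (\<Sum>x<d. (cmod ((P *\<^sub>v v) $ x))\<^sup>2)"
      by (rule cinner_self[OF Pv])
    moreover have "0 \<le> (\<Sum>x<d. (cmod ((P *\<^sub>v v) $ x))\<^sup>2)" by (rule sum_nonneg) simp
    ultimately show ?thesis by (metis Reals_of_real Re_complex_of_real)
  qed
  then show ?thesis unfolding psd_def using assms unfolding projection_def by simp
qed

lemma projection_spectrum: assumes "projection d P" shows "spectrum P \<subseteq> complex_of_real ` {0..1}"
proof
  fix k assume "k \<in> spectrum P"
  then obtain v where ev: "eigenvector P v k" unfolding spectrum_def eigenvalue_def by auto
  have Pc: "P \<in> carrier_mat d d" and PP: "P * P = P"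
    using assms unfolding projection_def hermitian_def by auto
  have v: "v \<in> carrier_vec d" "v \<noteq> 0\<^sub>v d" and Pv: "P *\<^sub>v v = k \<cdot>\<^sub>v v"
    using ev Pc unfolding eigenvector_def by auto
  have "P *\<^sub>v (P *\<^sub>v v) = P *\<^sub>v v" using assoc_mult_mat_vec[OF Pc Pc v(1)] PP by simp
  then have "(k * k) \<cdot>\<^sub>v v = k \<cdot>\<^sub>v v" unfolding Pv using mult_mat_vec[OF Pc v(1)] Pv
    by (simp add: smult_smult_assoc)
  moreover obtain i where i: "i < d" "v $ i \<noteq> 0"
    using v by (metis carrier_vecD eq_vecI index_zero_vec(1) index_zero_vec(2))
  ultimately have "k * k * v $ i = k * v $ i" by (metis index_smult_vec(1) carrier_vecD v(1))
  then have "k * k = k" using i by simp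
  then have "k = 0 \<or> k = 1"
    by (metis mult_cancel_right1 mult_zero_left)
  then show "k \<in> complex_of_real ` {0..1}" by (auto intro: image_eqI[of _ _ 0] image_eqI[of _ _ 1])
qed



lemma mtrace_W_one: assumes "density (d*d) W"
  shows "mtrace (W * kron (1\<^sub>m d) (1\<^sub>m d)) = 1"
proof -
  have Wc: "W \<in> carrier_mat (d*d) (d*d)" using assms unfolding density_def psd_def hermitian_def by auto
  then show ?thesis using assms unfolding kron_one density_def by simp
qed

lemma bell_sub: "bell n \<subseteq> bell_plus n"
proof
  fix p assume "p \<in> bell n"
  then obtain d E F W where pc: "p \<in> carrier_mat (n+1) (n+1)" and p00: "p $$ (0,0) = 1"
    and pE: "\<forall>i\<in>{1..n}. projection d (E i)" and pF: "\<forall>j\<in>{1..n}. projection d (F j)"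
    and W: "density (d*d) W"
    and c1: "\<forall>i\<in>{1..n}. complex_of_real (p $$ (i,0)) = mtrace (W * kron (E i) (1\<^sub>m d))"
    and c2: "\<forall>j\<in>{1..n}. complex_of_real (p $$ (0,j)) = mtrace (W * kron (1\<^sub>m d) (F j))"
    and c3: "\<forall>i\<in>{1..n}. \<forall>j\<in>{1..n}. complex_of_real (p $$ (i,j)) = mtrace (W * kron (E i) (F j))"
    unfolding bell_def by blast
  define A where "A = E(0 := 1\<^sub>m d)"
  define B where "B = F(0 := 1\<^sub>m d)"
  have "\<forall>i\<in>{0..n}. \<forall>j\<in>{0..n}. complex_of_real (p $$ (i,j)) = mtrace (W * kron (A i) (B j))"
  proof (intro ballI)
    fix i j assume i: "i \<in> {0..n}" and j: "j \<in> {0..n}"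
    show "complex_of_real (p $$ (i,j)) = mtrace (W * kron (A i) (B j))"
    proof (cases "i = 0")
      case True
      then show ?thesis
      proof (cases "j = 0")
        case True
        then show ?thesis using \<open>i = 0\<close> p00 mtrace_W_one[OF W] unfolding A_def B_def by simp
      next
        case False
        then show ?thesis using \<open>i = 0\<close> c2 j unfolding A_def B_def by auto
      qed
    next
      case False
      then show ?thesis
      proof (cases "j = 0")
        case True
        then show ?thesis using \<open>i \<noteq> 0\<close> c1 i unfolding A_def B_def by auto
      next
        case False
        then show ?thesis using \<open>i \<noteq> 0\<close> c3 i j unfolding A_def B_def by auto
      qed
    qed
  qed
  moreover have "\<forall>i\<in>{1..n}. psd d (A i) \<and> spectrum (A i) \<subseteq> complex_of_real ` {0..1}"
  proof
    fix i assume i: "i \<in> {1..n}"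
    then have "projection d (E i)" "A i = E i" using pE unfolding A_def by auto
    then show "psd d (A i) \<and> spectrum (A i) \<subseteq> complex_of_real ` {0..1}"
      using projection_psd projection_spectrum by metis
  qed
  moreover have "\<forall>j\<in>{1..n}. psd d (B j) \<and> spectrum (B j) \<subseteq> complex_of_real ` {0..1}"
  proof
    fix i assume i: "i \<in> {1..n}"
    then have "projection d (F i)" "B i = F i" using pF unfolding B_def by auto
    then show "psd d (B i) \<and> spectrum (B i) \<subseteq> complex_of_real ` {0..1}"
      using projection_psd projection_spectrum by metis
  qed
  moreover have "A 0 = 1\<^sub>m d" "B 0 = 1\<^sub>m d" unfolding A_def B_def by simp_all
  ultimately show "p \<in> bell_plus n" unfolding bell_plus_def using pc W by blast
qed

lemma bell_sup: "bell_plus n \<subseteq> bell n"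
proof
  fix q assume "q \<in> bell_plus n"
  then obtain d A B W where qc: "q \<in> carrier_mat (n+1) (n+1)"
    and A0: "A 0 = 1\<^sub>m d" and B0: "B 0 = 1\<^sub>m d"
    and pA: "\<forall>i\<in>{1..n}. psd d (A i) \<and> spectrum (A i) \<subseteq> complex_of_real ` {0..1}"
    and pB: "\<forall>j\<in>{1..n}. psd d (B j) \<and> spectrum (B j) \<subseteq> complex_of_real ` {0..1}"
    and W: "density (d*d) W"
    and cq: "\<forall>i\<in>{0..n}. \<forall>j\<in>{0..n}. complex_of_real (q $$ (i,j)) = mtrace (W * kron (A i) (B j))"
    unfolding bell_plus_def by blast
  have "complex_of_real (q $$ (0,0)) = 1" using cq A0 B0 mtrace_W_one[OF W] by auto
  then have q00: "q $$ (0,0) = 1" by simp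
  define N where "N = n + 1"
  define J where "J = Jm N d"
  have N: "0 < N" unfolding N_def by simp
  have Jc: "J \<in> carrier_mat (N*d) d" unfolding J_def by (rule Jm_carrier)
  have JJ: "adj J * J = 1\<^sub>m d" unfolding J_def by (rule Jm_inner[OF N])
  have dil: "\<exists>E. projection (N*d) E \<and> adj J * E * J = C"
    if C: "psd d C" "spectrum C \<subseteq> complex_of_real ` {0..1}" and i: "i \<in> {1..n}" for C i
  proof -
    have Cc: "C \<in> carrier_mat d d" and hC: "adj C = C" using C unfolding psd_def hermitian_def by auto
    obtain R T where R: "R \<in> carrier_mat d d" and T: "T \<in> carrier_mat d d"
      and RR: "R * adj R = C" and RT: "adj R * R + adj T * T = 1\<^sub>m d"
      using effect_sqrt[OF Cc hC C(2)] by blast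
    have "0 < i" "i < N" using i unfolding N_def by auto
    from dilation[OF R T RT this] show ?thesis unfolding J_def RR .
  qed
  have "\<forall>i\<in>{1..n}. \<exists>E. projection (N*d) E \<and> adj J * E * J = A i"
    using dil pA by blast
  then obtain E where E: "\<forall>i\<in>{1..n}. projection (N*d) (E i) \<and> adj J * E i * J = A i"
    by metis
  have "\<forall>i\<in>{1..n}. \<exists>F. projection (N*d) F \<and> adj J * F * J = B i"
    using dil pB by blast
  then obtain F where F: "\<forall>i\<in>{1..n}. projection (N*d) (F i) \<and> adj J * F i * J = B i"
    by metis
  define W' where "W' = kron J J * W * adj (kron J J)"
  have W': "density ((N*d)*(N*d)) W'" unfolding W'_def by (rule lift_state(1)[OF W Jc JJ])
  have tr: "mtrace (W' * kron P Q) = mtrace (W * kron (adj J * P * J) (adj J * Q * J))"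
    if "P \<in> carrier_mat (N*d) (N*d)" "Q \<in> carrier_mat (N*d) (N*d)" for P Q
    unfolding W'_def by (rule lift_state(2)[OF W Jc JJ that])
  have Ec: "E i \<in> carrier_mat (N*d) (N*d)" if "i \<in> {1..n}" for i
    using E that unfolding projection_def hermitian_def by auto
  have Fc: "F i \<in> carrier_mat (N*d) (N*d)" if "i \<in> {1..n}" for i
    using F that unfolding projection_def hermitian_def by auto
  have J1: "adj J * 1\<^sub>m (N*d) * J = 1\<^sub>m d" using JJ Jc by simp
  have "\<forall>i\<in>{1..n}. complex_of_real (q $$ (i,0)) = mtrace (W' * kron (E i) (1\<^sub>m (N*d)))"
  proof
    fix i assume i: "i \<in> {1..n}"
    have "mtrace (W' * kron (E i) (1\<^sub>m (N*d))) = mtrace (W * kron (A i) (B 0))"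
      using tr[OF Ec[OF i] one_carrier_mat] E i J1 B0 by simp
    then show "complex_of_real (q $$ (i,0)) = mtrace (W' * kron (E i) (1\<^sub>m (N*d)))"
      using cq i by auto
  qed
  moreover have "\<forall>j\<in>{1..n}. complex_of_real (q $$ (0,j)) = mtrace (W' * kron (1\<^sub>m (N*d)) (F j))"
  proof
    fix j assume j: "j \<in> {1..n}"
    have "mtrace (W' * kron (1\<^sub>m (N*d)) (F j)) = mtrace (W * kron (A 0) (B j))"
      using tr[OF one_carrier_mat Fc[OF j]] F j J1 A0 by simp
    then show "complex_of_real (q $$ (0,j)) = mtrace (W' * kron (1\<^sub>m (N*d)) (F j))"
      using cq j by auto
  qed
  moreover have "\<forall>i\<in>{1..n}. \<forall>j\<in>{1..n}. complex_of_real (q $$ (i,j)) = mtrace (W' * kron (E i) (F j))"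
  proof (intro ballI)
    fix i j assume i: "i \<in> {1..n}" and j: "j \<in> {1..n}"
    have "mtrace (W' * kron (E i) (F j)) = mtrace (W * kron (A i) (B j))"
      using tr[OF Ec[OF i] Fc[OF j]] E F i j by simp
    then show "complex_of_real (q $$ (i,j)) = mtrace (W' * kron (E i) (F j))"
      using cq i j by auto
  qed
  moreover have "\<forall>i\<in>{1..n}. projection (N*d) (E i)" using E by blast
  moreover have "\<forall>j\<in>{1..n}. projection (N*d) (F j)" using F by blast
  ultimately show "q \<in> bell n" unfolding bell_def using qc q00 W' by blast
qed

theorem theorem2:
  fixes n :: nat
  assumes "n \<ge> 1"
  shows "bell n = bell_plus n"
  using bell_sub bell_sup by blast


end
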